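(* For $n\geq 3$, there is no u-p-word for $n$-permutations containing exactly one occurrence of $\Diamond$.
   Context: An $n$-permutation is a permutation of $\{1,\ldots,n\}$. For a word $w$ of distinct numbers, $\mathrm{red}(w)$ is obtained by replacing the $i$-th smallest letter by $i$. Let $\Diamond$ be a symbol not among the integers. A word $f_1\cdots f_n$ over the positive integers together with $\Diamond$, whose integer letters are pairwise distinct, covers an $n$-permutation $\pi$ if one can substitute real numbers for the occurrences of $\Diamond$ (independently) so that the resulting word has $n$ pairwise distinct entries and reduces to $\pi$; equivalently, $f_i<f_j\iff\pi_i<\pi_j$ for all positions $i,j$ holding integers. A u-p-word for $n$-permutations is a word $u_1\cdots u_N$, $N\geq n$, over this alphabet containing at least one $\Diamond$, such that every factor $u_i\cdots u_{i+n-1}$ ($1\leq i\leq N-n+1$) has pairwise distinct integer letters and every $n$-permutation is covered by exactly one of these factors. *)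

theory Defs
  imports Main
begin

text \<open>Words over the positive integers together with the hole symbol Diamond.
  A letter is an element of type nat option: None is Diamond, Some k is the integer k.\<close>

type_synonym pword = "nat option list"

definition is_perm :: "nat \<Rightarrow> nat list \<Rightarrow> bool" where
  "is_perm n p \<longleftrightarrow> length p = n \<and> distinct p \<and> set p = {1..n}"

definition int_letters_distinct :: "pword \<Rightarrow> bool" where
  "int_letters_distinct f \<longleftrightarrow>
     (\<forall>i<length f. \<forall>j<length f. i \<noteq> j \<longrightarrow> f ! i \<noteq> None \<longrightarrow> f ! i \<noteq> f ! j)"

definition covers :: "pword \<Rightarrow> nat list \<Rightarrow> bool" where
  "covers f p \<longleftrightarrow> length f = length p \<and> int_letters_distinct f \<and>
     (\<forall>i<length f. \<forall>j<length f. \<forall>a b. f ! i = Some a \<longrightarrow> f ! j = Some b \<longrightarrow>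
        (a < b \<longleftrightarrow> p ! i < p ! j))"

definition factor :: "pword \<Rightarrow> nat \<Rightarrow> nat \<Rightarrow> pword" where
  "factor u n i = take n (drop i u)"

definition is_upword :: "nat \<Rightarrow> pword \<Rightarrow> bool" where
  "is_upword n u \<longleftrightarrow>
     length u \<ge> n \<and> None \<in> set u \<and> (\<forall>k. Some k \<in> set u \<longrightarrow> k \<ge> 1) \<and>
     (\<forall>i. i + n \<le> length u \<longrightarrow> int_letters_distinct (factor u n i)) \<and>
     (\<forall>p. is_perm n p \<longrightarrow> (\<exists>!i. i + n \<le> length u \<and> covers (factor u n i) p))"

end

theory Submission
  imports Defs "HOL-Combinatorics.Multiset_Permutations"
begin

lemma perms_eq: "{p. is_perm n p} = permutations_of_set {1..n}"
  by (auto simp: is_perm_def permutations_of_set_def distinct_card[symmetric])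

lemma card_perms: "card {p. is_perm n p} = fact n"
  by (simp add: perms_eq)

lemma perm_rank:
  assumes "is_perm n p" "l < n"
  shows "p!l = card {m. m < n \<and> p!m \<le> p!l}"
proof -
  have len: "length p = n" and dis: "distinct p" and st: "set p = {1..n}"
    using assms(1) by (auto simp: is_perm_def)
  have inj: "inj_on (nth p) {m. m < n \<and> p!m \<le> p!l}"
    using dis len by (auto simp: inj_on_def nth_eq_iff_index_eq)
  have "nth p ` {m. m < n \<and> p!m \<le> p!l} = {1..p!l}"
  proof
    show "nth p ` {m. m < n \<and> p!m \<le> p!l} \<subseteq> {1..p!l}"
    proof
      fix z assume "z \<in> nth p ` {m. m < n \<and> p!m \<le> p!l}"
      then obtain m where m: "m < n" "p!m \<le> p!l" "z = p!m" by auto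
      have "p!m \<in> {1..n}" using st len m(1) nth_mem by blast
      then show "z \<in> {1..p!l}" using m by auto
    qed
    show "{1..p!l} \<subseteq> nth p ` {m. m < n \<and> p!m \<le> p!l}"
    proof
      fix x assume x: "x \<in> {1..p!l}"
      have "p!l \<in> {1..n}" using st len assms(2) nth_mem by blast
      then have "x \<in> set p" using x st by auto
      then obtain m where "m < n" "p!m = x" using len by (auto simp: in_set_conv_nth)
      then show "x \<in> nth p ` {m. m < n \<and> p!m \<le> p!l}" using x by auto
    qed
  qed
  then have "card {m. m < n \<and> p!m \<le> p!l} = card {1..p!l}"
    using card_image[OF inj] by metis
  then show ?thesis by simp
qed

lemma perm_eqI:
  assumes "is_perm n p" "is_perm n q"
    and "\<And>a b. a<n \<Longrightarrow> b<n \<Longrightarrow> (p!a < p!b \<longleftrightarrow> q!a < q!b)"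
  shows "p = q"
proof (rule nth_equalityI)
  show "length p = length q" using assms by (simp add: is_perm_def)
  fix l assume "l < length p"
  then have l: "l < n" using assms by (simp add: is_perm_def)
  have "{m. m < n \<and> p!m \<le> p!l} = {m. m < n \<and> q!m \<le> q!l}"
    using assms(3)[OF _ l] assms(3)[OF l] by (auto simp: not_less[symmetric])
  then show "p!l = q!l" using perm_rank[OF assms(1) l] perm_rank[OF assms(2) l] by simp
qed

definition red :: "nat list \<Rightarrow> nat list" where
  "red xs = map (\<lambda>x. card {y \<in> set xs. y \<le> x}) xs"

lemma red_mono:
  assumes "x \<in> set (xs::nat list)" "x' \<in> set xs" "x < x'"
  shows "card {y \<in> set xs. y \<le> x} < card {y \<in> set xs. y \<le> x'}"
proof (rule psubset_card_mono)
  show "finite {y \<in> set xs. y \<le> x'}" by simp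
  show "{y \<in> set xs. y \<le> x} \<subset> {y \<in> set xs. y \<le> x'}"
  proof
    show "{y \<in> set xs. y \<le> x} \<subseteq> {y \<in> set xs. y \<le> x'}" using assms(3) by auto
    show "{y \<in> set xs. y \<le> x} \<noteq> {y \<in> set xs. y \<le> x'}" proof assume "{y \<in> set xs. y \<le> x} = {y \<in> set xs. y \<le> x'}" then have "x' \<in> {y \<in> set xs. y \<le> x}" using assms by auto then show False using assms by auto qed
  qed
qed

lemma red_props:
  assumes "distinct xs"
  shows "is_perm (length xs) (red xs)"
    and "\<And>a b. a < length xs \<Longrightarrow> b < length xs \<Longrightarrow> (red xs!a < red xs!b \<longleftrightarrow> xs!a < xs!b)"
proof -
  define f where "f x = card {y \<in> set xs. y \<le> x}" for x
  have mono: "x \<in> set xs \<Longrightarrow> x' \<in> set xs \<Longrightarrow> x < x' \<Longrightarrow> f x < f x'" for x x'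
    using red_mono f_def by simp
  have inj: "inj_on f (set xs)"
    by (rule inj_onI) (metis mono linorder_neqE_nat less_irrefl)
  show ord: "red xs!a < red xs!b \<longleftrightarrow> xs!a < xs!b" if "a < length xs" "b < length xs" for a b
  proof
    assume "red xs!a < red xs!b"
    then have "f (xs!a) < f (xs!b)" using that by (simp add: red_def f_def)
    then show "xs!a < xs!b" using mono that
      by (metis nth_mem linorder_neqE_nat less_asym less_irrefl)
  next
    assume "xs!a < xs!b"
    then show "red xs!a < red xs!b" using mono that by (simp add: red_def f_def)
  qed
  have rd: "red xs = map f xs" by (simp add: red_def f_def)
  have dis: "distinct (red xs)" using inj assms by (simp add: rd distinct_map)
  have sub: "set (red xs) \<subseteq> {1..length xs}"
  proof
    fix z assume "z \<in> set (red xs)"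
    then obtain x where x: "x \<in> set xs" "z = f x" by (auto simp: rd)
    have "{y \<in> set xs. y \<le> x} \<subseteq> set xs" by auto
    then have "f x \<le> card (set xs)" unfolding f_def by (simp add: card_mono)
    moreover have "f x \<ge> 1" unfolding f_def using x
      by (metis (mono_tags, lifting) One_nat_def Suc_leI card_gt_0_iff empty_iff finite_set finite_subset mem_Collect_eq order_refl subsetI)
    ultimately show "z \<in> {1..length xs}" using x distinct_card[OF assms] by auto
  qed
  have "card (set (red xs)) = length xs" using distinct_card[OF dis] by (simp add: red_def)
  then have "set (red xs) = {1..length xs}" using sub by (intro card_subset_eq) auto
  then show "is_perm (length xs) (red xs)" using dis by (simp add: is_perm_def red_def)
qed

lemma finite_perms: "finite {p. is_perm n p}"
  by (simp add: perms_eq)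

lemma perm_neq: "is_perm n p \<Longrightarrow> a < n \<Longrightarrow> b < n \<Longrightarrow> a \<noteq> b \<Longrightarrow> p!a \<noteq> p!b"
  by (auto simp: is_perm_def nth_eq_iff_index_eq)

lemma fact_gt1: "3 \<le> n \<Longrightarrow> n * (n - 2) < fact n"
proof -
  assume n: "3 \<le> n"
  obtain m where m: "n = Suc m" using n by (cases n) auto
  have f: "fact n = n * (fact m :: nat)" using m by (simp del: fact_Suc add: fact_Suc)
  have "m \<le> fact m" by (rule fact_ge_self)
  then have "n - 2 < fact m" using m n by linarith
  then have "n * (n-2) < n * fact m" using n by (intro mult_less_mono2) auto
  then show ?thesis using f by simp
qed

lemma fact_gt2: "4 \<le> n \<Longrightarrow> n * n < fact n"
proof -
  assume n: "4 \<le> n"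
  obtain m where m: "n = Suc m" using n by (cases n) auto
  obtain k where k: "m = Suc k" using n m by (cases m) auto
  have f: "fact n = n * (fact m :: nat)" using m by simp
  have f2: "fact m = m * (fact k :: nat)" using k by simp
  have "k \<le> fact k" by (rule fact_ge_self)
  then have "m * k \<le> m * fact k" by simp
  moreover have "n < m * k" using m k n
    by (cases k; simp; rename_tac j; case_tac j; simp)
  ultimately have "n < fact m" using f2 by linarith
  then have "n * n < n * fact m" using n by (intro mult_less_mono2) auto
  then show ?thesis using f by simp
qed

definition cov :: "nat \<Rightarrow> nat \<Rightarrow> (nat \<Rightarrow> nat) \<Rightarrow> nat \<Rightarrow> nat list \<Rightarrow> bool" where
  "cov n d val i p \<longleftrightarrow> length p = n \<and>
     (\<forall>a<n. \<forall>b<n. i+a \<noteq> d \<longrightarrow> i+b \<noteq> d \<longrightarrow> (val (i+a) < val (i+b) \<longleftrightarrow> p!a < p!b))"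

locale W =
  fixes n N d :: nat and val :: "nat \<Rightarrow> nat"
  assumes n3: "3 \<le> n" and nN: "n \<le> N" and dN: "d < N"
    and dist: "\<And>i a b. i + n \<le> N \<Longrightarrow> a < n \<Longrightarrow> b < n \<Longrightarrow> i+a \<noteq> d \<Longrightarrow> i+b \<noteq> d
       \<Longrightarrow> val (i+a) = val (i+b) \<Longrightarrow> a = b"
    and uniq: "\<And>p. is_perm n p \<Longrightarrow> \<exists>!i. i + n \<le> N \<and> cov n d val i p"
begin

abbreviation "C i p \<equiv> cov n d val i p"

lemma uniqE: "is_perm n p \<Longrightarrow> i+n \<le> N \<Longrightarrow> C i p \<Longrightarrow> j+n \<le> N \<Longrightarrow> C j p \<Longrightarrow> i = j"
  using uniq by blast

lemma exE: "is_perm n p \<Longrightarrow> \<exists>i. i+n \<le> N \<and> C i p"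
  using uniq by blast

lemma covE: "C i p \<Longrightarrow> a < n \<Longrightarrow> b < n \<Longrightarrow> i+a \<noteq> d \<Longrightarrow> i+b \<noteq> d \<Longrightarrow> (p!a < p!b \<longleftrightarrow> val (i+a) < val (i+b))"
  by (auto simp: cov_def)

lemma covI: "length p = n \<Longrightarrow> (\<And>a b. a<n \<Longrightarrow> b<n \<Longrightarrow> i+a \<noteq> d \<Longrightarrow> i+b \<noteq> d \<Longrightarrow> (p!a < p!b \<longleftrightarrow> val (i+a) < val (i+b))) \<Longrightarrow> C i p"
  by (auto simp: cov_def)

definition free :: "nat \<Rightarrow> bool" where "free i \<longleftrightarrow> d < i \<or> i + n \<le> d"

lemma free_nd: "free i \<Longrightarrow> i + a \<noteq> d \<or> \<not> a < n"
  by (auto simp: free_def)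

lemma free_perm: assumes "i + n \<le> N" "free i"
  shows "is_perm n (red (map val [i..<i+n]))" "C i (red (map val [i..<i+n]))"
proof -
  let ?xs = "map val [i..<i+n]"
  have nth: "?xs!a = val (i+a)" if "a<n" for a using that by simp
  have nd: "i + a \<noteq> d" if "a < n" for a using free_nd[OF assms(2)] that by auto
  have dis: "distinct ?xs"
    unfolding distinct_conv_nth using dist[OF assms(1)] nd by auto
  have len: "length ?xs = n" by simp
  show "is_perm n (red ?xs)" using red_props(1)[OF dis] len by simp
  show "C i (red ?xs)"
  proof (rule covI)
    show "length (red ?xs) = n" by (simp add: red_def)
    fix a b assume "a < n" "b < n"
    then show "(red ?xs!a < red ?xs!b) = (val (i+a) < val (i+b))"
      using red_props(2)[OF dis, of a b] len nth by simp
  qed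
qed

lemma free_le1: assumes "free i" "is_perm n p" "is_perm n q" "C i p" "C i q"
  shows "p = q"
proof (rule perm_eqI[OF assms(2,3)])
  fix a b assume "a < n" "b < n"
  then show "(p!a < p!b) = (q!a < q!b)"
    using covE[OF assms(4)] covE[OF assms(5)] free_nd[OF assms(1)] by metis
qed

lemma free_card: assumes "free i"
  shows "card {p. is_perm n p \<and> C i p} \<le> 1"
proof -
  have "finite {p. is_perm n p \<and> C i p}"
    by (rule finite_subset[OF _ finite_perms]) auto
  then show ?thesis using free_le1[OF assms] by (simp add: card_le_Suc0_iff_eq)
qed

lemma cnt_key:
  assumes p: "is_perm n p" "C i p" and id: "i \<le> d" "d < i+n" and b: "b < n" "i+b \<noteq> d"
  shows "p!(d-i) < p!b \<longleftrightarrow> p!(d-i) \<le> card {m. m<n \<and> i+m \<noteq> d \<and> val (i+m) \<le> val (i+b)}"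
proof -
  let ?k = "d - i"
  have k: "?k < n" "i + ?k = d" using id by auto
  have kb: "?k \<noteq> b" using b k by auto
  let ?S = "{m. m<n \<and> i+m \<noteq> d \<and> val (i+m) \<le> val (i+b)}"
  have S: "{m. m<n \<and> m \<noteq> ?k \<and> p!m \<le> p!b} = ?S"
  proof -
    have "p!m \<le> p!b \<longleftrightarrow> val (i+m) \<le> val (i+b)" if "m < n" "i+m \<noteq> d" for m
      using covE[OF p(2) b(1) that(1) b(2) that(2)] by (simp add: not_less[symmetric])
    then show ?thesis using k by auto
  qed
  have fin: "finite ?S" by simp
  have kS: "?k \<notin> ?S" using k by auto
  have r: "p!b = card {m. m < n \<and> p!m \<le> p!b}" by (rule perm_rank[OF p(1) b(1)])
  have ne: "p!?k \<noteq> p!b" using perm_neq[OF p(1) k(1) b(1) kb] .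
  show ?thesis
  proof (cases "p!?k \<le> p!b")
    case True
    have "{m. m < n \<and> p!m \<le> p!b} = insert ?k {m. m<n \<and> m \<noteq> ?k \<and> p!m \<le> p!b}"
      using True k by auto
    then have "p!b = Suc (card ?S)" using r S fin kS by simp
    then show ?thesis using True ne by auto
  next
    case False
    have "{m. m < n \<and> p!m \<le> p!b} = {m. m<n \<and> m \<noteq> ?k \<and> p!m \<le> p!b}"
      using False k by auto
    then have "p!b = card ?S" using r S by simp
    then show ?thesis using False by auto
  qed
qed

lemma cnt: assumes "i \<le> d" "d < i+n"
  shows "card {p. is_perm n p \<and> C i p} \<le> n"
proof -
  let ?S = "{p. is_perm n p \<and> C i p}"
  let ?k = "d - i"
  have k: "?k < n" "i + ?k = d" using assms by auto
  have inj: "inj_on (\<lambda>p. p!?k) ?S"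
  proof (rule inj_onI)
    fix p q assume p: "p \<in> ?S" and q: "q \<in> ?S" and e: "p!?k = q!?k"
    have key: "(p!?k < p!b) = (q!?k < q!b)" if "b < n" "i+b \<noteq> d" for b
      using cnt_key[of p i b] cnt_key[of q i b] p q assms that e by simp
    show "p = q"
    proof (rule perm_eqI[of n])
      show "is_perm n p" "is_perm n q" using p q by auto
      fix a b assume ab: "a < n" "b < n"
      show "(p!a < p!b) = (q!a < q!b)"
      proof (cases "i+a = d")
        case True
        then have a: "a = ?k" by auto
        show ?thesis
        proof (cases "i + b = d")
          case True then show ?thesis using a by auto
        next
          case False then show ?thesis using key[OF ab(2) False] a by simp
        qed
      next
        case False
        show ?thesis
        proof (cases "i + b = d")
          case True
          then have bk: "b = ?k" by auto
          have "(p!a < p!b) = (\<not> p!?k < p!a)"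
            using perm_neq[of n p a ?k] p ab k bk False by auto
          moreover have "(q!a < q!b) = (\<not> q!?k < q!a)"
            using perm_neq[of n q a ?k] q ab k bk False by auto
          ultimately show ?thesis using key[OF ab(1) False] by simp
        next
          case F2: False
          show ?thesis using covE[of i p a b] covE[of i q a b] p q ab False F2 by simp
        qed
      qed
    qed
  qed
  have img: "(\<lambda>p. p!?k) ` ?S \<subseteq> {1..n}"
  proof
    fix x assume "x \<in> (\<lambda>p. p!?k) ` ?S"
    then obtain p where "p \<in> ?S" "x = p!?k" by auto
    then show "x \<in> {1..n}" using k by (auto simp: is_perm_def dest: nth_mem)
  qed
  show ?thesis using card_inj_on_le[OF inj img] by simp
qed

lemma count_all: assumes "\<And>i. i+n \<le> N \<Longrightarrow> i \<le> d \<and> d < i+n"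
  shows "fact n \<le> n * (N-n+1)"
proof -
  have "{p. is_perm n p} \<subseteq> (\<Union>i\<in>{..N-n}. {p. is_perm n p \<and> C i p})"
  proof
    fix p assume "p \<in> {p. is_perm n p}"
    then obtain i where "i+n \<le> N" "C i p" "is_perm n p" using exE by blast
    then show "p \<in> (\<Union>i\<in>{..N-n}. {p. is_perm n p \<and> C i p})" by auto
  qed
  moreover have "finite (\<Union>i\<in>{..N-n}. {p. is_perm n p \<and> C i p})"
    by (rule finite_subset[OF _ finite_perms]) auto
  ultimately have "card {p. is_perm n p} \<le> card (\<Union>i\<in>{..N-n}. {p. is_perm n p \<and> C i p})"
    by (rule card_mono[rotated])
  also have "\<dots> \<le> (\<Sum>i\<in>{..N-n}. card {p. is_perm n p \<and> C i p})" by (rule card_UN_le) simp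
  also have "\<dots> \<le> (\<Sum>i\<in>{..N-n}. n)"
  proof (rule sum_mono)
    fix i assume "i \<in> {..N-n}"
    then have "i + n \<le> N" using nN by auto
    then show "card {p. is_perm n p \<and> C i p} \<le> n" using assms cnt by blast
  qed
  also have "\<dots> = n * (N-n+1)" by simp
  finally show ?thesis by (simp add: card_perms)
qed

end

context W begin

definition inQ :: "nat list \<Rightarrow> bool" where
  "inQ q \<longleftrightarrow> (\<forall>a<n-1. \<forall>b<n-1. (q!a < q!b \<longleftrightarrow> val (d+1+a) < val (d+1+b)))"

lemma T_cov: assumes "length p = n"
  and "\<And>a b. 0<a \<Longrightarrow> a<n \<Longrightarrow> 0<b \<Longrightarrow> b<n \<Longrightarrow> (p!a < p!b \<longleftrightarrow> val (d+a) < val (d+b))"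
  shows "C d p"
  using assms by (intro covI) auto

lemma T_cov': assumes "length p = n" "inQ q"
  and "\<And>a b. 0<a \<Longrightarrow> a<n \<Longrightarrow> 0<b \<Longrightarrow> b<n \<Longrightarrow> (p!a < p!b \<longleftrightarrow> q!(a-1) < q!(b-1))"
  shows "C d p"
proof (rule T_cov[OF assms(1)])
  fix a b assume ab: "0<a" "a<n" "0<b" "b<n"
  have "q!(a-1) < q!(b-1) \<longleftrightarrow> val (d+1+(a-1)) < val (d+1+(b-1))"
    using assms(2) ab unfolding inQ_def by auto
  moreover have "d+1+(a-1) = d+a" "d+1+(b-1) = d+b" using ab by auto
  ultimately show "(p!a < p!b) = (val (d+a) < val (d+b))" using assms(3)[OF ab] by simp
qed

lemma free_pred:
  assumes j: "j+n \<le> N" "free j" "1 \<le> j" "free (j-1)"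
    and q: "is_perm n q" "inQ q" "C j q" and A: "d + n \<le> N"
  shows False
proof -
  let ?p = "red (map val [j-1..<j-1+n])"
  have j1: "j - 1 + n \<le> N" using j by auto
  have pp: "is_perm n ?p" "C (j-1) ?p" using free_perm[OF j1 j(4)] by auto
  have "C d ?p"
  proof (rule T_cov'[OF _ q(2)])
    show "length ?p = n" using pp by (simp add: is_perm_def)
    fix a b assume ab: "0<a" "a<n" "0<b" "b<n"
    have e1: "j-1+a = j+(a-1)" "j-1+b = j+(b-1)" using ab j by auto
    have "(?p!a < ?p!b) = (val (j-1+a) < val (j-1+b))"
      using covE[OF pp(2) ab(2) ab(4)] free_nd[OF j(4)] ab by blast
    also have "\<dots> = (q!(a-1) < q!(b-1))"
    proof -
      have nd: "j+(a-1) \<noteq> d" "j+(b-1) \<noteq> d" using free_nd[OF j(2), of "a-1"] free_nd[OF j(2), of "b-1"] ab by auto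
      have "a - 1 < n" "b - 1 < n" using ab by auto
      then show ?thesis using covE[OF q(3) _ _ nd] e1 by simp
    qed
    finally show "(?p!a < ?p!b) = (q!(a-1) < q!(b-1))" .
  qed
  then have "j - 1 = d" using uniqE[OF pp(1) j1 pp(2) A] by blast
  then show False using j(4) n3 by (auto simp: free_def)
qed

lemma exists_c:
  fixes g :: "nat \<Rightarrow> nat"
  assumes "finite I" "\<And>l. l \<in> I \<Longrightarrow> 1 \<le> g l"
    and "\<And>l l'. l \<in> I \<Longrightarrow> l' \<in> I \<Longrightarrow> P l' \<Longrightarrow> g l \<le> g l' \<Longrightarrow> P l"
  shows "\<exists>c. odd c \<and> (\<forall>l\<in>I. 2 * g l < c \<longleftrightarrow> P l)"
proof (cases "{l\<in>I. P l} = {}")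
  case True
  then show ?thesis using assms(2) by (intro exI[of _ 1]) force
next
  case False
  define M where "M = Max (g ` {l\<in>I. P l})"
  have fin: "finite (g ` {l\<in>I. P l})" using assms(1) by simp
  have ne: "g ` {l\<in>I. P l} \<noteq> {}" using False by simp
  obtain l0 where l0: "l0 \<in> I" "P l0" "g l0 = M"
    using Max_in[OF fin ne] M_def by auto
  show ?thesis
  proof (intro exI[of _ "2*M+1"] conjI ballI)
    show "odd (2*M+1)" by simp
    fix l assume l: "l \<in> I"
    show "(2 * g l < 2 * M + 1) = P l"
    proof
      assume "2 * g l < 2 * M + 1"
      then have "g l \<le> g l0" using l0 by simp
      then show "P l" using assms(3)[OF l l0(1) l0(2)] by simp
    next
      assume "P l"
      then have "g l \<le> M" unfolding M_def using fin l by (intro Max_ge) auto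
      then show "2 * g l < 2 * M + 1" by simp
    qed
  qed
qed


lemma perm_pos: "is_perm n q \<Longrightarrow> l < n \<Longrightarrow> 1 \<le> q!l \<and> q!l \<le> n"
  by (auto simp: is_perm_def dest!: nth_mem)

lemma constr:
  assumes j: "j+n \<le> N" "1 \<le> j" "j \<le> d" "d \<le> j+n-2"
    and q: "is_perm n q" "inQ q" "C j q" and A: "d + n \<le> N"
  shows False
proof -
  let ?I = "{l. l < n-1 \<and> j+l \<noteq> d}"
  have lenq: "length q = n" using q by (simp add: is_perm_def)
  have dc: "val (j+l) < val (j-1)"
    if "l \<in> ?I" "l' \<in> ?I" "val (j+l') < val (j-1)" "q!l \<le> q!l'" for l l'
  proof (cases "l = l'")
    case True then show ?thesis using that by simp
  next
    case False
    have "l < n" "l' < n" using that by auto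
    then have "q!l \<noteq> q!l'" using perm_neq[OF q(1), of l l'] False by auto
    then have "q!l < q!l'" using that(4) by simp
    then have "val (j+l) < val (j+l')" using covE[OF q(3), of l l'] that by auto
    then show ?thesis using that by simp
  qed
  have "\<exists>c. odd c \<and> (\<forall>l\<in>?I. 2*q!l < c \<longleftrightarrow> val (j+l) < val (j-1))"
  proof (rule exists_c)
    show "finite ?I" by simp
    show "1 \<le> q!l" if "l \<in> ?I" for l
    proof -
      have "l < n" using that by auto
      then show ?thesis using perm_pos[OF q(1), of l] by simp
    qed
    show "val (j+l) < val (j-1)"
      if "l \<in> ?I" "l' \<in> ?I" "val (j+l') < val (j-1)" "q!l \<le> q!l'" for l l'
      using dc[OF that] .
  qed
  then obtain c where c: "odd c" "\<And>l. l \<in> ?I \<Longrightarrow> (2*q!l < c \<longleftrightarrow> val (j+l) < val (j-1))"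
    by blast
  let ?xs = "c # map (\<lambda>x. 2*x) (take (n-1) q)"
  have len: "length ?xs = n" using lenq n3 by simp
  have xS: "?xs!(Suc l) = 2*q!l" if "l < n-1" for l using that lenq by simp
  have dis: "distinct ?xs"
  proof -
    have "distinct (take (n-1) q)" using q(1) by (simp add: is_perm_def)
    then have "distinct (map (\<lambda>x. 2*x) (take (n-1) q))" by (simp add: distinct_map inj_on_def)
    moreover have "c \<notin> set (map (\<lambda>x. 2*x) (take (n-1) q))" using c(1) by auto
    ultimately show ?thesis by simp
  qed
  let ?p = "red ?xs"
  have pp: "is_perm n ?p" using red_props(1)[OF dis] len by simp
  have ord: "(?p!a < ?p!b) = (?xs!a < ?xs!b)" if "a<n" "b<n" for a b
    using red_props(2)[OF dis] len that by simp
  have cne: "c \<noteq> 2 * x" for x using c(1) by auto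
  have vne: "val (j-1) \<noteq> val (j+l)" if "l < n-1" "j+l \<noteq> d" for l
  proof
    assume e: "val (j-1) = val (j+l)"
    have h: "j-1+n \<le> N" "0<n" "Suc l < n" "j-1+0 \<noteq> d" "j-1+Suc l \<noteq> d"
      "val (j-1+0) = val (j-1+Suc l)" using j that e n3 by auto
    have "0 = Suc l" by (rule dist[OF h])
    then show False by simp
  qed
  have c1: "C (j-1) ?p"
  proof (rule covI)
    show "length ?p = n" using pp by (simp add: is_perm_def)
    fix a b assume ab: "a<n" "b<n" "j-1+a \<noteq> d" "j-1+b \<noteq> d"
    show "(?p!a < ?p!b) = (val (j-1+a) < val (j-1+b))"
      unfolding ord[OF ab(1,2)]
    proof (cases a)
      case 0
      show "(?xs!a < ?xs!b) = (val (j-1+a) < val (j-1+b))"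
      proof (cases b)
        case 0 then show ?thesis using \<open>a=0\<close> by simp
      next
        case (Suc l')
        have l': "l' < n-1" "j+l' \<noteq> d" "j-1+b = j+l'" using ab Suc j by auto
        have "(c < 2*q!l') = (\<not> 2*q!l' < c)" using cne[of "q!l'"] by auto
        also have "\<dots> = (\<not> val (j+l') < val (j-1))" using c(2)[of l'] l' by auto
        also have "\<dots> = (val (j-1) < val (j+l'))" using vne[OF l'(1,2)] by auto
        finally show ?thesis using \<open>a=0\<close> Suc xS[OF l'(1)] l'(3) by simp
      qed
    next
      case (Suc l)
      have l: "l < n-1" "j+l \<noteq> d" "j-1+a = j+l" using ab Suc j by auto
      have xa: "?xs!a = 2*q!l" using Suc xS[OF l(1)] by simp
      show "(?xs!a < ?xs!b) = (val (j-1+a) < val (j-1+b))"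
      proof (cases b)
        case 0
        have "(2*q!l < c) = (val (j+l) < val (j-1))" using c(2)[of l] l by auto
        then show ?thesis using 0 xa l(3) by simp
      next
        case (Suc l')
        have l': "l' < n-1" "j+l' \<noteq> d" "j-1+b = j+l'" using ab Suc j by auto
        have "(q!l < q!l') = (val (j+l) < val (j+l'))" using covE[OF q(3), of l l'] l l' by auto
        then show ?thesis using xa Suc xS[OF l'(1)] l(3) l'(3) by simp
      qed
    qed
  qed
  have c2: "C d ?p"
  proof (rule T_cov'[OF _ q(2)])
    show "length ?p = n" using pp by (simp add: is_perm_def)
    fix a b assume ab: "0<a" "a<n" "0<b" "b<n"
    have "?xs!a = 2*q!(a-1)" "?xs!b = 2*q!(b-1)" using xS[of "a-1"] xS[of "b-1"] ab by auto
    then show "(?p!a < ?p!b) = (q!(a-1) < q!(b-1))" using ord[OF ab(2,4)] by simp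
  qed
  have "j - 1 = d" using uniqE[OF pp _ c1 A c2] j by auto
  then show False using j by auto
qed


lemma special:
  assumes n4: "4 \<le> n" and A: "d+n \<le> N" and j: "j+n-1 = d"
    and q: "is_perm n q" "inQ q" "C j q"
  shows False
proof -
  have jN: "j+n \<le> N" using j A n4 by auto
  have VY: "(val (j+a) < val (j+b)) = (val (d+1+a) < val (d+1+b))" if "a < n-1" "b < n-1" for a b
  proof -
    have "j+a \<noteq> d" "j+b \<noteq> d" "a < n" "b < n" using that j by auto
    then have "(q!a < q!b) = (val (j+a) < val (j+b))" using covE[OF q(3)] by blast
    moreover have "(q!a < q!b) = (val (d+1+a) < val (d+1+b))" using q(2) that unfolding inQ_def by blast
    ultimately show ?thesis by simp
  qed
  show False
  proof (cases "1 \<le> j")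
    case True
    have fr: "free (j-1)" using j True n4 by (auto simp: free_def)
    have j1: "j-1+n \<le> N" using jN by auto
    let ?p = "red (map val [j-1..<j-1+n])"
    have pp: "is_perm n ?p" "C (j-1) ?p" using free_perm[OF j1 fr] by auto
    have "C d ?p"
    proof (rule T_cov)
      show "length ?p = n" using pp by (simp add: is_perm_def)
      fix a b assume ab: "0<a" "a<n" "0<b" "b<n"
      have nd: "j-1+a \<noteq> d" "j-1+b \<noteq> d" using free_nd[OF fr] ab by auto
      have "(?p!a < ?p!b) = (val (j-1+a) < val (j-1+b))" using covE[OF pp(2) ab(2) ab(4) nd] .
      also have "\<dots> = (val (j+(a-1)) < val (j+(b-1)))" using ab True by (simp add: algebra_simps)
      also have "\<dots> = (val (d+1+(a-1)) < val (d+1+(b-1)))" using VY[of "a-1" "b-1"] ab by auto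
      also have "\<dots> = (val (d+a) < val (d+b))" using ab by simp
      finally show "(?p!a < ?p!b) = (val (d+a) < val (d+b))" .
    qed
    then have "j - 1 = d" using uniqE[OF pp(1) j1 pp(2) A] by blast
    then show False using j True n4 by auto
  next
    case False
    then have j0: "j = 0" by auto
    show False
    proof (cases "d+1+n \<le> N")
      case True
      have fr: "free (d+1)" by (simp add: free_def)
      let ?p = "red (map val [d+1..<d+1+n])"
      have pp: "is_perm n ?p" "C (d+1) ?p" using free_perm[OF True fr] by auto
      have "C j ?p"
      proof (rule covI)
        show "length ?p = n" using pp by (simp add: is_perm_def)
        fix a b assume ab: "a<n" "b<n" "j+a \<noteq> d" "j+b \<noteq> d"
        have ab': "a < n-1" "b < n-1" using ab j j0 by auto
        have nd: "d+1+a \<noteq> d" "d+1+b \<noteq> d" by auto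
        have "(?p!a < ?p!b) = (val (d+1+a) < val (d+1+b))" using covE[OF pp(2) ab(1,2) nd] .
        then show "(?p!a < ?p!b) = (val (j+a) < val (j+b))" using VY[OF ab'] by simp
      qed
      then have "d+1 = j" using uniqE[OF pp(1) True pp(2) jN] by blast
      then show False using j0 by simp
    next
      case False
      have NN: "N = d + n" using False A by auto
      have "fact n \<le> n * (N-n+1)"
      proof (rule count_all)
        fix i assume "i+n \<le> N"
        then show "i \<le> d \<and> d < i+n" using NN j j0 n4 by auto
      qed
      moreover have "N - n + 1 = n" using NN j j0 n4 by auto
      ultimately have "fact n \<le> n * n" by (metis (no_types))
      then show False using fact_gt2[OF n4] by linarith
    qed
  qed
qed

lemma Qwin:
  assumes H3: "n = 3 \<Longrightarrow> d = 0" and A: "d+n \<le> N" and q: "is_perm n q" "inQ q"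
    and jc: "j+n \<le> N" "C j q"
  shows "j = 0 \<or> j = d+1"
proof (rule ccontr)
  assume nj: "\<not> (j = 0 \<or> j = d+1)"
  then have j1: "1 \<le> j" by auto
  show False
  proof (cases "free j")
    case fj: True
    show False
    proof (cases "free (j-1)")
      case True then show False using free_pred[OF jc(1) fj j1 True q(1,2) jc(2) A] by blast
    next
      case False then show False using fj nj j1 by (auto simp: free_def)
    qed
  next
    case False
    then have jd: "j \<le> d" "d < j+n" by (auto simp: free_def)
    show False
    proof (cases "d \<le> j+n-2")
      case True then show False using constr[OF jc(1) j1 jd(1) True q(1,2) jc(2) A] by blast
    next
      case False
      then have e: "j+n-1 = d" using jd by auto
      have "4 \<le> n" using H3 n3 e j1 by (cases "n = 3") auto
      then show False using special[OF _ A e q(1,2) jc(2)] by blast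
    qed
  qed
qed

lemma loop_step1:
  assumes d0: "d = 0" and q: "is_perm n q" "inQ q" "C 0 q"
  shows "Suc a < n \<Longrightarrow> (q!a < q!(Suc a) \<longleftrightarrow> val 1 < val 2)"
proof (induction a)
  case 0
  have "1 < n - 1" using n3 by auto
  then show ?case using q(2) d0 unfolding inQ_def by (auto simp: numeral_2_eq_2)
next
  case (Suc a)
  have "(q!(Suc a) < q!(Suc (Suc a))) = (val (0 + Suc a) < val (0 + Suc (Suc a)))"
    using covE[OF q(3), of "Suc a" "Suc (Suc a)"] Suc(2) d0 by simp
  also have "\<dots> = (q!a < q!(Suc a))"
  proof -
    have "a < n-1" "Suc a < n-1" using Suc(2) by auto
    then show ?thesis using q(2) d0 unfolding inQ_def by auto
  qed
  also have "\<dots> = (val 1 < val 2)" using Suc by auto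
  finally show ?case .
qed

lemma loop_step2:
  assumes d0: "d = 0" and q: "is_perm n q" "inQ q" "C 0 q"
  shows "a < b \<Longrightarrow> b < n \<Longrightarrow> (val 1 < val 2 \<longrightarrow> q!a < q!b) \<and> (\<not> val 1 < val 2 \<longrightarrow> q!b < q!a)"
proof (induction b)
  case 0 then show ?case by simp
next
  case (Suc b)
  have st: "(q!b < q!(Suc b)) = (val 1 < val 2)" using loop_step1[OF assms, of b] Suc by simp
  have ne: "q!b \<noteq> q!(Suc b)" using perm_neq[OF q(1), of b "Suc b"] Suc by simp
  show ?case
  proof (cases "a = b")
    case True then show ?thesis using st ne by auto
  next
    case False
    then have "a < b" using Suc by auto
    then have ih: "(val 1 < val 2 \<longrightarrow> q!a < q!b) \<and> (\<not> val 1 < val 2 \<longrightarrow> q!b < q!a)"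
      using Suc by auto
    then show ?thesis using st ne by auto
  qed
qed

lemma loop_uniq:
  assumes d0: "d = 0" and q: "is_perm n q" "inQ q" "C 0 q" and q': "is_perm n q'" "inQ q'" "C 0 q'"
  shows "q = q'"
proof (rule perm_eqI[OF q(1) q'(1)])
  fix a b assume ab: "a < n" "b < n"
  show "(q!a < q!b) = (q'!a < q'!b)"
  proof (cases a b rule: linorder_cases)
    case less
    then show ?thesis using loop_step2[OF d0 q, of a b] loop_step2[OF d0 q', of a b] ab by auto
  next
    case equal then show ?thesis by simp
  next
    case greater
    then show ?thesis using loop_step2[OF d0 q, of b a] loop_step2[OF d0 q', of b a] ab by auto
  qed
qed

lemma pig:
  assumes "1 \<le> d" "d \<le> n-2"
  shows "card {q. is_perm n q \<and> inQ q \<and> C 0 q} \<le> 2"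
proof -
  let ?S = "{q. is_perm n q \<and> inQ q \<and> C 0 q}"
  have inj: "inj_on (\<lambda>q. q!d < q!(n-1)) ?S"
  proof (rule inj_onI)
    fix q q' assume q: "q \<in> ?S" and q': "q' \<in> ?S" and e: "(q!d < q!(n-1)) = (q'!d < q'!(n-1))"
    have dn: "d < n" "n-1 < n" "d \<noteq> n-1" using assms n3 by auto
    have e2: "(q!(n-1) < q!d) = (q'!(n-1) < q'!d)"
      using e perm_neq[of n q d "n-1"] perm_neq[of n q' d "n-1"] q q' dn
      by (metis (no_types, lifting) linorder_neqE_nat mem_Collect_eq not_less_iff_gr_or_eq)
    show "q = q'"
    proof (rule perm_eqI[of n])
      show "is_perm n q" "is_perm n q'" using q q' by auto
      fix a b assume ab: "a < n" "b < n"
      show "(q!a < q!b) = (q'!a < q'!b)"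
      proof (cases "a \<noteq> d \<and> b \<noteq> d")
        case True
        then show ?thesis using covE[of 0 q a b] covE[of 0 q' a b] q q' ab by simp
      next
        case F1: False
        show ?thesis
        proof (cases "a < n-1 \<and> b < n-1")
          case True
          then show ?thesis using q q' unfolding inQ_def by auto
        next
          case False
          then have "(a = d \<and> b = n-1) \<or> (a = n-1 \<and> b = d) \<or> a = b" using F1 ab dn by auto
          then show ?thesis using e e2 by auto
        qed
      qed
    qed
  qed
  have "card ?S \<le> card (UNIV :: bool set)"
    by (rule card_inj_on_le[OF inj]) auto
  then show ?thesis by simp
qed


definition sh :: "nat \<Rightarrow> nat \<Rightarrow> nat" where "sh s x = (if x < s then x else Suc x)"

lemma sh_less: "sh s x < sh s y \<longleftrightarrow> x < y"
  by (auto simp: sh_def)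

definition mkQ :: "nat \<Rightarrow> nat list" where
  "mkQ s = map (sh s) (red (map val [d+1..<d+n])) @ [s]"

lemma mkQ:
  assumes A: "d+n \<le> N" and s: "s \<in> {1..n}"
  shows "is_perm n (mkQ s)" "inQ (mkQ s)" "mkQ s ! (n-1) = s"
proof -
  let ?ys = "map val [d+1..<d+n]"
  have leny: "length ?ys = n-1" by simp
  have ysn: "?ys!a = val (d+1+a)" if "a < n-1" for a using that by (simp add: add.assoc)
  have dis: "distinct ?ys"
  proof (unfold distinct_conv_nth, intro allI impI)
    fix a b assume ab: "a < length ?ys" "b < length ?ys" "a \<noteq> b"
    show "?ys!a \<noteq> ?ys!b"
    proof
      assume e: "?ys!a = ?ys!b"
      have h: "Suc a < n" "Suc b < n" "d + Suc a \<noteq> d" "d + Suc b \<noteq> d"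
        "val (d + Suc a) = val (d + Suc b)" using ab e ysn leny by auto
      have "Suc a = Suc b" by (rule dist[OF A h])
      then show False using ab by simp
    qed
  qed
  let ?r = "red ?ys"
  have rp: "is_perm (n-1) ?r" using red_props(1)[OF dis] leny by simp
  have rord: "(?r!a < ?r!b) = (val (d+1+a) < val (d+1+b))" if "a < n-1" "b < n-1" for a b
    using red_props(2)[OF dis, of a b] that leny ysn by simp
  have lr: "length ?r = n-1" using rp by (simp add: is_perm_def)
  have nthQ: "mkQ s ! a = sh s (?r!a)" if "a < n-1" for a
    using that lr by (simp add: mkQ_def nth_append)
  show "mkQ s ! (n-1) = s" using lr by (simp add: mkQ_def nth_append)
  show "inQ (mkQ s)" unfolding inQ_def using nthQ rord sh_less by simp
  have set_r: "set ?r = {1..n-1}" using rp by (simp add: is_perm_def)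
  have st: "set (mkQ s) = {1..n}"
  proof -
    have "set (mkQ s) = insert s (set (map (sh s) ?r))" by (simp add: mkQ_def)
    also have "\<dots> = insert s (sh s ` {1..n-1})" by (simp only: set_map set_r)
    also have "\<dots> = {1..n}"
    proof
      show "insert s (sh s ` {1..n-1}) \<subseteq> {1..n}" using s by (auto simp: sh_def)
      show "{1..n} \<subseteq> insert s (sh s ` {1..n-1})"
      proof
        fix z assume z: "z \<in> {1..n}"
        show "z \<in> insert s (sh s ` {1..n-1})"
        proof (cases z s rule: linorder_cases)
          case less
          then have "z = sh s z" "z \<in> {1..n-1}" using z s by (auto simp: sh_def)
          then show ?thesis by blast
        next
          case equal then show ?thesis by simp
        next
          case greater
          then have "z = sh s (z-1)" "z-1 \<in> {1..n-1}" using z s by (auto simp: sh_def)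
          then show ?thesis by blast
        qed
      qed
    qed
    finally show ?thesis by simp
  qed
  have dQ: "distinct (mkQ s)"
  proof -
    have "inj_on (sh s) (set ?r)" by (rule inj_onI) (metis sh_less linorder_neqE_nat less_irrefl)
    then have "distinct (map (sh s) ?r)" using rp by (simp add: distinct_map is_perm_def)
    moreover have "s \<notin> set (map (sh s) ?r)" by (auto simp: sh_def)
    ultimately show ?thesis by (simp add: mkQ_def)
  qed
  have "length (mkQ s) = n" using lr n3 by (simp add: mkQ_def)
  then show "is_perm n (mkQ s)" using st dQ by (simp add: is_perm_def)
qed

lemma perm3: "is_perm 3 [1,2,3]" "is_perm 3 [1,3,2]" "is_perm 3 [3,1,2]" "is_perm 3 [2,3,1]"
  by (auto simp: is_perm_def)

lemma overlap3:
  assumes n: "n = 3" and d1: "1 \<le> d" and A: "d + n \<le> N"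
  shows False
proof -
  let ?a = "val (d-1)" and ?b = "val (d+1)" and ?c = "val (d+2)"
  have ab: "?a \<noteq> ?b"
  proof
    assume e: "?a = ?b"
    have h: "d-1+n \<le> N" "0 < n" "2 < n" "d-1+0 \<noteq> d" "d-1+2 \<noteq> d" "val (d-1+0) = val (d-1+2)"
      using A n d1 e by auto
    show False using dist[OF h] by simp
  qed
  have bc: "?b \<noteq> ?c"
  proof
    assume e: "?b = ?c"
    have h: "d+n \<le> N" "1 < n" "2 < n" "d+1 \<noteq> d" "d+2 \<noteq> d" "val (d+1) = val (d+2)"
      using A n d1 e by auto
    show False using dist[OF h] by simp
  qed
  obtain p where p: "is_perm 3 p" "(p!0 < p!2) = (?a < ?b)" "(p!2 < p!0) = (?b < ?a)"
    "(p!1 < p!2) = (?b < ?c)" "(p!2 < p!1) = (?c < ?b)"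
  proof (cases "?a < ?b"; cases "?b < ?c")
    assume "?a < ?b" "?b < ?c" then show thesis using that[of "[1,2,3]"] perm3 by auto
  next
    assume "?a < ?b" "\<not> ?b < ?c" then show thesis using that[of "[1,3,2]"] perm3 bc by auto
  next
    assume "\<not> ?a < ?b" "?b < ?c" then show thesis using that[of "[3,1,2]"] perm3 ab by auto
  next
    assume "\<not> ?a < ?b" "\<not> ?b < ?c" then show thesis using that[of "[2,3,1]"] perm3 ab bc by auto
  qed
  have lp: "length p = n" using p(1) n by (simp add: is_perm_def)
  have c1: "C (d-1) p"
  proof (rule covI[OF lp])
    fix x y assume xy: "x<n" "y<n" "d-1+x \<noteq> d" "d-1+y \<noteq> d"
    have "x = 0 \<or> x = 2" "y = 0 \<or> y = 2" using xy n d1 by auto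
    moreover have "d-1+2 = d+1" using d1 by simp
    ultimately show "(p!x < p!y) = (val (d-1+x) < val (d-1+y))" using p by auto
  qed
  have c2: "C d p"
  proof (rule covI[OF lp])
    fix x y assume xy: "x<n" "y<n" "d+x \<noteq> d" "d+y \<noteq> d"
    have "x = 1 \<or> x = 2" "y = 1 \<or> y = 2" using xy n by auto
    then show "(p!x < p!y) = (val (d+x) < val (d+y))" using p by auto
  qed
  have "d - 1 = d" using uniqE[of p "d-1" d] p(1) n c1 c2 A d1 by auto
  then show False using d1 by simp
qed

lemma caseA:
  assumes A: "d + n \<le> N"
  shows False
proof (cases "n = 3 \<and> 1 \<le> d")
  case True then show False using overlap3 A by auto
next
  case False
  then have H3: "n = 3 \<Longrightarrow> d = 0" by auto
  let ?Q = "mkQ ` {1..n}"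
  have "inj_on mkQ {1..n}"
    by (rule inj_onI) (metis mkQ(3)[OF A])
  then have cQ: "card ?Q = n" by (simp add: card_image)
  define A0 where "A0 = {q. is_perm n q \<and> inQ q \<and> C 0 q}"
  define A1 where "A1 = {q. is_perm n q \<and> C (d+1) q \<and> d+1+n \<le> N}"
  have sub: "?Q \<subseteq> A0 \<union> A1"
  proof
    fix q assume "q \<in> ?Q"
    then obtain s where s: "s \<in> {1..n}" "q = mkQ s" by auto
    have qq: "is_perm n q" "inQ q" using mkQ[OF A s(1)] s(2) by auto
    obtain j where j: "j + n \<le> N" "C j q" using exE[OF qq(1)] by blast
    have "j = 0 \<or> j = d+1" using Qwin[OF H3 A qq j] .
    then show "q \<in> A0 \<union> A1" using qq j unfolding A0_def A1_def by auto
  qed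
  have fA0: "finite A0" unfolding A0_def by (rule finite_subset[OF _ finite_perms]) auto
  have fA1: "finite A1" unfolding A1_def by (rule finite_subset[OF _ finite_perms]) auto
  have cA1: "card A1 \<le> 1"
  proof -
    have "A1 \<subseteq> {p. is_perm n p \<and> C (d+1) p}" unfolding A1_def by auto
    then have "card A1 \<le> card {p. is_perm n p \<and> C (d+1) p}"
      by (rule card_mono[rotated]) (rule finite_subset[OF _ finite_perms], auto)
    also have "\<dots> \<le> 1" by (rule free_card) (simp add: free_def)
    finally show ?thesis .
  qed
  have cA0: "card A0 \<le> 1 \<or> (4 \<le> n \<and> card A0 \<le> 2)"
  proof (cases "n \<le> d")
    case True
    have "A0 \<subseteq> {p. is_perm n p \<and> C 0 p}" unfolding A0_def by auto
    then have "card A0 \<le> card {p. is_perm n p \<and> C 0 p}"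
      by (rule card_mono[rotated]) (rule finite_subset[OF _ finite_perms], auto)
    also have "\<dots> \<le> 1" by (rule free_card) (use True in \<open>simp add: free_def\<close>)
    finally show ?thesis by simp
  next
    case nd: False
    show ?thesis
    proof (cases "d = n - 1")
      case True
      have n4: "4 \<le> n" using H3 n3 True by (cases "n = 3") auto
      have "A0 = {}"
      proof (rule ccontr)
        assume "A0 \<noteq> {}"
        then obtain q where "q \<in> A0" by auto
        then show False using special[OF n4 A, of 0 q] True n3 unfolding A0_def by auto
      qed
      then show ?thesis by simp
    next
      case False
      show ?thesis
      proof (cases "d = 0")
        case True
        have "card A0 \<le> Suc 0" using fA0
          by (simp add: card_le_Suc0_iff_eq) (auto simp: A0_def intro: loop_uniq[OF True])
        then show ?thesis by simp
      next
        case d0: False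
        have n4: "4 \<le> n" using H3 n3 d0 by (cases "n = 3") auto
        have "card A0 \<le> 2" unfolding A0_def by (rule pig) (use d0 nd False in auto)
        then show ?thesis using n4 by simp
      qed
    qed
  qed
  have "n \<le> card (A0 \<union> A1)" using card_mono[OF _ sub] fA0 fA1 cQ by simp
  also have "\<dots> \<le> card A0 + card A1" by (rule card_Un_le)
  finally show False using cA0 cA1 n3 by auto
qed


lemma revcov:
  assumes i: "i + n \<le> N" and lp: "length p = n"
  shows "cov n (N-1-d) (\<lambda>i. val (N-1-i)) i p \<longleftrightarrow> C (N-n-i) (rev p)"
proof -
  have rv: "rev p ! x = p ! (n-1-x)" if "x < n" for x using that lp by (simp add: rev_nth)
  have tr: "N-n-i + x = N-1-(i+(n-1-x))" if "x < n" for x using that i by auto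
  have tr2: "N-1-(i+x) = N-n-i + (n-1-x)" if "x < n" for x using that i by auto
  show ?thesis
  proof
    assume H: "cov n (N-1-d) (\<lambda>i. val (N-1-i)) i p"
    show "C (N-n-i) (rev p)"
    proof (rule covI)
      show "length (rev p) = n" using lp by simp
      fix a b assume ab: "a<n" "b<n" "N-n-i+a \<noteq> d" "N-n-i+b \<noteq> d"
      have ab': "n-1-a < n" "n-1-b < n" "i+(n-1-a) \<noteq> N-1-d" "i+(n-1-b) \<noteq> N-1-d"
        using ab tr dN by auto
      have "(val (N-1-(i+(n-1-a))) < val (N-1-(i+(n-1-b)))) = (p!(n-1-a) < p!(n-1-b))"
        using H ab' unfolding cov_def by blast
      then show "(rev p!a < rev p!b) = (val (N-n-i+a) < val (N-n-i+b))"
        using rv ab tr by simp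
    qed
  next
    assume H: "C (N-n-i) (rev p)"
    show "cov n (N-1-d) (\<lambda>i. val (N-1-i)) i p" unfolding cov_def
    proof (intro conjI allI impI)
      show "length p = n" by (rule lp)
      fix a b assume ab: "a<n" "b<n" "i+a \<noteq> N-1-d" "i+b \<noteq> N-1-d"
      have ab': "n-1-a < n" "n-1-b < n" "N-n-i+(n-1-a) \<noteq> d" "N-n-i+(n-1-b) \<noteq> d"
        using ab tr2 dN i by auto
      have "(rev p!(n-1-a) < rev p!(n-1-b)) = (val (N-n-i+(n-1-a)) < val (N-n-i+(n-1-b)))"
        using covE[OF H ab'] .
      moreover have "rev p!(n-1-a) = p!a" "rev p!(n-1-b) = p!b" using rv ab by auto
      ultimately show "(val (N-1-(i+a)) < val (N-1-(i+b))) = (p!a < p!b)"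
        using tr2 ab by simp
    qed
  qed
qed

lemma rev_W: "W n N (N-1-d) (\<lambda>i. val (N-1-i))"
proof (unfold_locales)
  show "3 \<le> n" by (rule n3)
  show "n \<le> N" by (rule nN)
  show "N-1-d < N" using dN by auto
next
  fix i a b assume h: "i+n \<le> N" "a < n" "b < n" "i+a \<noteq> N-1-d" "i+b \<noteq> N-1-d"
    "val (N-1-(i+a)) = val (N-1-(i+b))"
  have h2: "N-n-i+n \<le> N" "n-1-a < n" "n-1-b < n" "N-n-i+(n-1-a) \<noteq> d" "N-n-i+(n-1-b) \<noteq> d"
    "val (N-n-i+(n-1-a)) = val (N-n-i+(n-1-b))"
    using h dN by (auto simp: algebra_simps)
  have "n-1-a = n-1-b" by (rule dist[OF h2])
  then show "a = b" using h by auto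
next
  fix p assume pp: "is_perm n p"
  have lp: "length p = n" using pp by (simp add: is_perm_def)
  have rp: "is_perm n (rev p)" using pp by (simp add: is_perm_def)
  obtain j where j: "j + n \<le> N" "C j (rev p)" using exE[OF rp] by blast
  show "\<exists>!i. i + n \<le> N \<and> cov n (N-1-d) (\<lambda>i. val (N-1-i)) i p"
  proof (rule ex1I[of _ "N-n-j"])
    have "N-n-(N-n-j) = j" using j by auto
    then show "N-n-j + n \<le> N \<and> cov n (N-1-d) (\<lambda>i. val (N-1-i)) (N-n-j) p"
      using revcov[of "N-n-j" p] lp j nN by auto
  next
    fix i assume i: "i + n \<le> N \<and> cov n (N-1-d) (\<lambda>i. val (N-1-i)) i p"
    then have "C (N-n-i) (rev p)" using revcov lp by blast
    then have "N-n-i = j" using uniqE[OF rp _ _ j] i by auto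
    then show "i = N-n-j" using i j by auto
  qed
qed

lemma contra: False
proof (cases "d + n \<le> N")
  case True then show False by (rule caseA)
next
  case nA: False
  show False
  proof (cases "n - 1 \<le> d")
    case True
    interpret R: W n N "N-1-d" "\<lambda>i. val (N-1-i)" by (rule rev_W)
    show False by (rule R.caseA) (use True dN in auto)
  next
    case False
    have "fact n \<le> n * (N-n+1)"
    proof (rule count_all)
      fix i assume "i+n \<le> N"
      then show "i \<le> d \<and> d < i+n" using nA False by auto
    qed
    moreover have "N-n+1 \<le> n-2" using nA False nN by auto
    ultimately have "fact n \<le> n * (n-2)" by (meson le_trans mult_le_mono2)
    then show False using fact_gt1[OF n3] by linarith
  qed
qed

end

lemma count1:
  "count_list xs x = 1 \<Longrightarrow> i < length xs \<Longrightarrow> j < length xs \<Longrightarrow> xs!i = x \<Longrightarrow> xs!j = x \<Longrightarrow> i = j"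
proof (induction xs arbitrary: i j)
  case Nil then show ?case by simp
next
  case (Cons y ys)
  show ?case
  proof (cases "y = x")
    case True
    then have "count_list ys x = 0" using Cons.prems(1) by simp
    then have nx: "x \<notin> set ys" by (simp add: count_list_0_iff)
    have "i = 0" using Cons.prems(2,4) nx by (cases i) auto
    moreover have "j = 0" using Cons.prems(3,5) nx by (cases j) auto
    ultimately show ?thesis by simp
  next
    case False
    then have c: "count_list ys x = 1" using Cons.prems(1) by simp
    obtain i' where i': "i = Suc i'" using Cons.prems(4) False by (cases i) auto
    obtain j' where j': "j = Suc j'" using Cons.prems(5) False by (cases j) auto
    have "i' = j'" using Cons.IH[OF c, of i' j'] Cons.prems i' j' by simp
    then show ?thesis using i' j' by simp
  qed
qed

theorem corollary4:
  fixes n :: nat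
  assumes "n \<ge> 3"
  shows "\<not> (\<exists>u. is_upword n u \<and> count_list u None = 1)"
proof
  assume "\<exists>u. is_upword n u \<and> count_list u None = 1"
  then obtain u where up: "is_upword n u" and c1: "count_list u None = 1" by blast
  define N where "N = length u"
  have nN: "n \<le> N" using up by (simp add: is_upword_def N_def)
  have "None \<in> set u" using up by (simp add: is_upword_def)
  then obtain d where d: "d < N" "u!d = None" by (auto simp: in_set_conv_nth N_def)
  have uniqd: "i = d" if "i < N" "u!i = None" for i
    using count1[OF c1, of i d] that d by (simp add: N_def)
  define val where "val i = (case u!i of None \<Rightarrow> 0 | Some x \<Rightarrow> x)" for i
  have sv: "u!i = Some (val i)" if "i < N" "i \<noteq> d" for i
  proof (cases "u!i")
    case None then show ?thesis using uniqd that by auto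
  next
    case (Some x) then show ?thesis by (simp add: val_def)
  qed
  have fac: "factor u n i ! a = u!(i+a)" if "i+n \<le> N" "a < n" for i a
    using that by (simp add: factor_def N_def)
  have lenf: "length (factor u n i) = n" if "i+n \<le> N" for i
    using that by (simp add: factor_def N_def)
  have ild: "int_letters_distinct (factor u n i)" if "i+n \<le> N" for i
    using up that by (simp add: is_upword_def N_def)
  have coveq: "covers (factor u n i) p \<longleftrightarrow> cov n d val i p" if i: "i+n \<le> N" for i p
  proof
    assume H: "covers (factor u n i) p"
    show "cov n d val i p" unfolding cov_def
    proof (intro conjI allI impI)
      show "length p = n" using H lenf[OF i] by (simp add: covers_def)
      fix a b assume ab: "a < n" "b < n" "i+a \<noteq> d" "i+b \<noteq> d"
      have "factor u n i ! a = Some (val (i+a))" "factor u n i ! b = Some (val (i+b))"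
        using fac[OF i] sv ab i by auto
      moreover have "a < length (factor u n i)" "b < length (factor u n i)" using ab lenf[OF i] by auto
      ultimately show "(val (i+a) < val (i+b)) = (p!a < p!b)"
        using H unfolding covers_def by blast
    qed
  next
    assume H: "cov n d val i p"
    show "covers (factor u n i) p" unfolding covers_def
    proof (intro conjI allI impI)
      show "length (factor u n i) = length p" using H lenf[OF i] by (simp add: cov_def)
      show "int_letters_distinct (factor u n i)" by (rule ild[OF i])
      fix a b x y assume ab: "a < length (factor u n i)" "b < length (factor u n i)"
        "factor u n i ! a = Some x" "factor u n i ! b = Some y"
      have a: "a < n" "b < n" using ab lenf[OF i] by auto
      have "i+a \<noteq> d" "i+b \<noteq> d" using ab(3,4) fac[OF i a(1)] fac[OF i a(2)] d by auto
      moreover have "x = val (i+a)" "y = val (i+b)"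
        using ab(3,4) fac[OF i a(1)] fac[OF i a(2)] by (auto simp: val_def)
      ultimately show "(x < y) = (p!a < p!b)" using H a unfolding cov_def by blast
    qed
  qed
  interpret W n N d val
  proof
    show "3 \<le> n" using assms by simp
    show "n \<le> N" by (rule nN)
    show "d < N" by (rule d(1))
  next
    fix i a b assume h: "i + n \<le> N" "a < n" "b < n" "i + a \<noteq> d" "i + b \<noteq> d"
      "val (i + a) = val (i + b)"
    show "a = b"
    proof (rule ccontr)
      assume ne: "a \<noteq> b"
      have fa: "factor u n i ! a = Some (val (i+a))" "factor u n i ! b = Some (val (i+b))"
        using fac[OF h(1)] sv h by auto
      have "factor u n i ! a \<noteq> factor u n i ! b"
      proof -
        have "a < length (factor u n i)" "b < length (factor u n i)" "factor u n i ! a \<noteq> None"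
          using h(2,3) lenf[OF h(1)] fa by auto
        then show ?thesis using ild[OF h(1)] ne unfolding int_letters_distinct_def by blast
      qed
      then show False using fa h(6) by simp
    qed
  next
    fix p assume pp: "is_perm n p"
    have "\<exists>!i. i + n \<le> length u \<and> covers (factor u n i) p" using up pp by (simp add: is_upword_def)
    moreover have "(i + n \<le> length u \<and> covers (factor u n i) p) = (i + n \<le> N \<and> cov n d val i p)" for i
      using coveq N_def by auto
    ultimately show "\<exists>!i. i + n \<le> N \<and> cov n d val i p" by simp
  qed
  show False by (rule contra)
qed

end
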